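(* Let $d>d_{\min}$, $n\in\mathbb{N}_+$, $\epsilon\in[0,1]$, and let $\mathcal{S}$ be any $(n,d,\epsilon,\mathcal{A})$ sampling (the case $k=1$). Let $(W,T,H)$ have joint law $P^{\mathcal{A}}_{H|T}P^{\mathcal{S}}_{T|W}P_W$. Then $$\epsilon \;\ge\; \sup_{\gamma\ge 0}\Big\{\mathbb{P}\big[\jmath_W(W,H,d,\mathcal{A})\ge bn+\gamma\big]-e^{-\gamma}\Big\}.$$
   Context: Framework. $\mathcal{W}$ is a countable set and $W\sim P_W$ on $\mathcal{W}$. For $k\in\mathbb{N}_+$, $W^k=(W_1,\dots,W_k)$ has i.i.d. components with law $P_W$. $\mathcal{H}$ is a countable set of hypotheses. Each training sample is described by a fixed number $b\in\mathbb{N}_+$ of bits. $\mathcal{T}_n$ denotes the set of all training datasets of size $n$, and $|\mathcal{T}_n|=2^{bn}$. A sampling strategy $\mathcal{S}$ is a Markov kernel $P^{\mathcal{S}}_{T|W^k}$ from $\mathcal{W}^k$ to training datasets. A randomized learning algorithm $\mathcal{A}$ is a fixed Markov kernel $P^{\mathcal{A}}_{H|T}$ from training datasets to $\mathcal{H}$. The hypothesis is $H=\mathcal{A}(\mathcal{S}(W^k))$, so that $W^k\to T\to H$ is a Markov chain. The distortion $\mathsf{d}:\mathcal{W}\times\mathcal{H}\to[0,\infty)$ is bounded (Assumption (I)), and $\mathsf{d}(w^k;h):=\frac1k\sum_{i=1}^k\mathsf{d}(w_i;h)$. All logarithms are natural. $(k,n,d,\epsilon,\mathcal{A})$ sampling: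 a sampling strategy $\mathcal{S}$ such that $|\mathcal{S}(W^k)|=n$ almost surely and $\mathbb{P}[\mathsf{d}(W^k;\mathcal{A}(\mathcal{S}(W^k)))>d]\le\epsilon$. For $k=1$ it is called an $(n,d,\epsilon,\mathcal{A})$ sampling. Rate-distortion quantity (for $k=1$): $$\mathbb{R}_W(d,\mathcal{A}):=\inf_{P^{\mathcal{S}}_{T|W}:\ \mathbb{E}_{P^{\mathcal{A}}_{H|T}P^{\mathcal{S}}_{T|W}P_W}[\mathsf{d}(W;H)]\le d}\ \mathbb{I}(W;H).$$ $d_{\min}:=\inf\{d:\mathbb{R}_W(d,\mathcal{A})<\infty\}$ is assumed to exist and be finite (Assumption (II)). Assumption (III): there is an optimal sampling strategy $\mathcal{S}^*$, with kernel $P^{\mathcal{S}^*}_{T|W}$, attaining the infimum and satisfying $\mathbb{E}[\mathsf{d}(W;\mathcal{A}(\mathcal{S}^*(W)))]=d$. $H^{\mathcal{S}^*}_{\mathcal{A}}$ denotes the hypothesis with joint law $P^{\mathcal{A},\mathcal{S}^*}_{H|W}P_W$, where $P^{\mathcal{A},\mathcal{S}^*}_{H|W}(h|w)=\sum_t P^{\mathcal{A}}_{H|T}(h|t)P^{\mathcal{S}^*}_{T|W}(t|w)$. Information density: $\iota_{W;H^{\mathcal{S}^*}_{\mathcal{A}}}(w;h):=\log\frac{\mathrm{d}P_{WH}}{\mathrm{d}(P_W\times P_H)}(w,h)$, computed under this joint law. $\lambda^*_{\mathcal{A}}(d):=-\frac{\mathrm{d}\mathbb{R}_W(d,\mathcal{A})}{\mathrm{d}d}>0$.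 The $\mathcal{A}$-specified $d$-tilted information is $$\jmath_W(w,h,d,\mathcal{A}):=\iota_{W;H^{\mathcal{S}^*}_{\mathcal{A}}}(w;h)+\lambda^*_{\mathcal{A}}(d)\big(\mathsf{d}(w;h)-d\big).$$ *)

theory Defs
  imports "HOL-Probability.Probability"
begin

text \<open>Training samples are bit strings of length b; a training dataset is a list of samples.\<close>

definition datasets :: "nat \<Rightarrow> nat \<Rightarrow> bool list list set" where
  "datasets b n = {t. length t = n \<and> (\<forall>x\<in>set t. length x = b)}"

definition all_datasets :: "nat \<Rightarrow> bool list list set" where
  "all_datasets b = {t. \<forall>x\<in>set t. length x = b}"

definition joint :: "'w pmf \<Rightarrow> ('w \<Rightarrow> 't pmf) \<Rightarrow> ('t \<Rightarrow> 'h pmf) \<Rightarrow> ('w \<times> 'h) pmf" where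
  "joint PW S A = bind_pmf PW (\<lambda>w. bind_pmf (S w) (\<lambda>t. map_pmf (\<lambda>h. (w, h)) (A t)))"

text \<open>Log-ratio dP_WH / d(P_W x P_H) (meaningful on the support of the joint law).\<close>
definition log_ratio :: "('w \<times> 'h) pmf \<Rightarrow> 'w \<times> 'h \<Rightarrow> real" where
  "log_ratio J x = ln (pmf J x / (pmf (map_pmf fst J) (fst x) * pmf (map_pmf snd J) (snd x)))"

definition info_density :: "('w \<times> 'h) pmf \<Rightarrow> 'w \<Rightarrow> 'h \<Rightarrow> ereal" where
  "info_density J w h = (if pmf J (w, h) = 0 then -\<infinity> else ereal (log_ratio J (w, h)))"

text \<open>Mutual information I(W;H) = E[\<iota>(W;H)], an extended real expectation
  (positive part minus negative part; the negative part is always finite).\<close>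
definition mutual_info_pmf :: "('w \<times> 'h) pmf \<Rightarrow> ereal" where
  "mutual_info_pmf J =
     enn2ereal (\<integral>\<^sup>+ x. ennreal (log_ratio J x) \<partial>measure_pmf J)
   - enn2ereal (\<integral>\<^sup>+ x. ennreal (- log_ratio J x) \<partial>measure_pmf J)"

definition avg_distortion ::
  "'w pmf \<Rightarrow> ('w \<Rightarrow> 't pmf) \<Rightarrow> ('t \<Rightarrow> 'h pmf) \<Rightarrow> ('w \<Rightarrow> 'h \<Rightarrow> real) \<Rightarrow> real" where
  "avg_distortion PW S A dst = measure_pmf.expectation (joint PW S A) (\<lambda>(w, h). dst w h)"

definition RD :: "nat \<Rightarrow> 'w pmf \<Rightarrow> (bool list list \<Rightarrow> 'h pmf) \<Rightarrow> ('w \<Rightarrow> 'h \<Rightarrow> real) \<Rightarrow> real \<Rightarrow> ereal" where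
  "RD b PW A dst \<delta> =
     (INF S \<in> {S. (\<forall>w. set_pmf (S w) \<subseteq> all_datasets b) \<and> avg_distortion PW S A dst \<le> \<delta>}.
        mutual_info_pmf (joint PW S A))"

definition dmin :: "nat \<Rightarrow> 'w pmf \<Rightarrow> (bool list list \<Rightarrow> 'h pmf) \<Rightarrow> ('w \<Rightarrow> 'h \<Rightarrow> real) \<Rightarrow> real" where
  "dmin b PW A dst = Inf {\<delta>. RD b PW A dst \<delta> < \<infinity>}"

definition tilted_info ::
  "'w pmf \<Rightarrow> (bool list list \<Rightarrow> 'h pmf) \<Rightarrow> ('w \<Rightarrow> 'h \<Rightarrow> real) \<Rightarrow> ('w \<Rightarrow> bool list list pmf)
     \<Rightarrow> real \<Rightarrow> real \<Rightarrow> 'w \<Rightarrow> 'h \<Rightarrow> ereal" where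
  "tilted_info PW A dst Sstar lam \<delta> w h =
     info_density (joint PW Sstar A) w h + ereal (lam * (dst w h - \<delta>))"

end

theory Submission
  imports Defs
begin

lemma fst_joint: "map_pmf fst (joint PW S A) = PW"
  unfolding joint_def by (simp add: map_bind_pmf map_pmf_comp o_def bind_return_pmf')

lemma set_joint: "x \<in> set_pmf (joint PW S A) \<Longrightarrow> fst x \<in> set_pmf PW"
  unfolding joint_def by (auto simp: set_bind_pmf)

lemma card_datasets: "finite (datasets b n) \<and> card (datasets b n) = 2 ^ (b * n)"
proof -
  have e: "datasets b n = {xs. set xs \<subseteq> {x. length x = b} \<and> length xs = n}"
    unfolding datasets_def by auto
  have f: "{x::bool list. length x = b} = {xs. set xs \<subseteq> UNIV \<and> length xs = b}" by auto
  have c: "finite {x::bool list. length x = b} \<and> card {x::bool list. length x = b} = 2 ^ b"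
    unfolding f using finite_lists_length_eq[of "UNIV::bool set"] card_lists_length_eq[of "UNIV::bool set"]
    by auto
  have cf: "finite {x::bool list. length x = b}" using c by blast
  have "card {xs. set xs \<subseteq> {x::bool list. length x = b} \<and> length xs = n} = (2 ^ b) ^ n"
    using card_lists_length_eq[OF cf, of n] c by simp
  then show ?thesis unfolding e using finite_lists_length_eq[OF cf, of n]
    by (simp add: power_mult)
qed

lemma marg_snd:
  fixes J :: "('w::countable \<times> 'h) pmf"
  shows "(\<integral>\<^sup>+w. ennreal (pmf J (w, h)) \<partial>count_space UNIV) = ennreal (pmf (map_pmf snd J) h)"
proof -
  have b: "bij_betw (\<lambda>w. (w, h)) UNIV (snd -` {h})"
    by (auto simp: bij_betw_def inj_on_def image_def)
  have "(\<integral>\<^sup>+w. ennreal (pmf J (w, h)) \<partial>count_space UNIV) = (\<integral>\<^sup>+x. ennreal (pmf J x) \<partial>count_space (snd -` {h}))"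
    using nn_integral_bij_count_space[OF b, of "\<lambda>x. ennreal (pmf J x)"] by simp
  also have "\<dots> = emeasure (measure_pmf J) (snd -` {h})" by (rule nn_integral_pmf)
  also have "\<dots> = ennreal (pmf (map_pmf snd J) h)"
    by (simp add: pmf_map measure_pmf.emeasure_eq_measure)
  finally show ?thesis .
qed

lemma key:
  fixes J :: "('w::countable \<times> 'h) pmf"
  assumes fs: "\<And>x. x \<in> set_pmf J \<Longrightarrow> fst x \<in> set_pmf PW"
  shows "(\<integral>\<^sup>+w. ennreal (pmf J (w,h) / (pmf PW w * pmf (map_pmf snd J) h)) \<partial>measure_pmf PW) \<le> 1"
proof -
  define p where "p = pmf (map_pmf snd J) h"
  have pw: "ennreal (pmf PW w) * ennreal (pmf J (w,h) / (pmf PW w * p)) = ennreal (pmf J (w,h)) * ennreal (1/p)" for w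
  proof (cases "pmf PW w = 0")
    case True
    then have "(w,h) \<notin> set_pmf J" using fs[of "(w,h)"] by (auto simp: set_pmf_iff)
    then have "pmf J (w,h) = 0" by (simp add: set_pmf_iff)
    then show ?thesis using True by simp
  next
    case False
    have "pmf PW w * (pmf J (w,h) / (pmf PW w * p)) = pmf J (w,h) * (1/p)"
      using False by (simp add: field_simps)
    then show ?thesis
      by (metis ennreal_mult' pmf_nonneg divide_nonneg_nonneg mult_nonneg_nonneg)
  qed
  have "(\<integral>\<^sup>+w. ennreal (pmf J (w,h) / (pmf PW w * pmf (map_pmf snd J) h)) \<partial>measure_pmf PW)
      = (\<integral>\<^sup>+w. ennreal (pmf J (w,h)) * ennreal (1/p) \<partial>count_space UNIV)"
    by (simp add: nn_integral_measure_pmf pw p_def[symmetric])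
  also have "\<dots> = (\<integral>\<^sup>+w. ennreal (pmf J (w,h)) \<partial>count_space UNIV) * ennreal (1/p)"
    by (simp add: nn_integral_multc)
  also have "\<dots> = ennreal p * ennreal (1/p)"
    by (simp add: marg_snd p_def)
  also have "\<dots> \<le> 1"
  proof (cases "p = 0")
    case False
    have p0: "0 \<le> p" by (simp add: p_def)
    have "ennreal p * ennreal (1/p) = ennreal (p * (1/p))"
      using ennreal_mult'[OF p0, of "1/p"] by simp
    also have "p * (1/p) = 1" using False by simp
    finally show ?thesis by simp
  qed simp
  finally show ?thesis .
qed

lemma inner_bound:
  fixes PW :: "'w::countable pmf" and B :: "'h::countable pmf"
  assumes fs: "\<And>x. x \<in> set_pmf J \<Longrightarrow> fst x \<in> set_pmf PW" and c0: "0 \<le> c"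
  shows "(\<integral>\<^sup>+w. \<integral>\<^sup>+h. ennreal (c * (pmf J (w,h) / (pmf PW w * pmf (map_pmf snd J) h))) \<partial>measure_pmf B \<partial>measure_pmf PW) \<le> ennreal c"
proof -
  let ?r = "\<lambda>w h. pmf J (w,h) / (pmf PW w * pmf (map_pmf snd J) h)"
  have "(\<integral>\<^sup>+w. \<integral>\<^sup>+h. ennreal (c * ?r w h) \<partial>measure_pmf B \<partial>measure_pmf PW)
      = (\<integral>\<^sup>+w. \<integral>\<^sup>+h. ennreal (pmf B h) * ennreal (c * ?r w h) \<partial>count_space UNIV \<partial>measure_pmf PW)"
    by (rule nn_integral_cong) (rule nn_integral_measure_pmf)
  also have "\<dots> = (\<integral>\<^sup>+h. \<integral>\<^sup>+w. ennreal (pmf B h) * ennreal (c * ?r w h) \<partial>measure_pmf PW \<partial>count_space UNIV)"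
    by (rule nn_integral_count_space_nn_integral) auto
  also have "\<dots> = (\<integral>\<^sup>+h. ennreal (pmf B h) * (ennreal c * \<integral>\<^sup>+w. ennreal (?r w h) \<partial>measure_pmf PW) \<partial>count_space UNIV)"
  proof (rule nn_integral_cong)
    fix h
    have e: "\<And>w. ennreal (c * ?r w h) = ennreal c * ennreal (?r w h)" by (rule ennreal_mult'[OF c0])
    show "(\<integral>\<^sup>+w. ennreal (pmf B h) * ennreal (c * ?r w h) \<partial>measure_pmf PW) = ennreal (pmf B h) * (ennreal c * \<integral>\<^sup>+w. ennreal (?r w h) \<partial>measure_pmf PW)"
      unfolding e by (simp add: nn_integral_cmult mult.assoc)
  qed
  also have "\<dots> \<le> (\<integral>\<^sup>+h. ennreal (pmf B h) * ennreal c \<partial>count_space UNIV)"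
    apply (rule nn_integral_mono)
    apply (rule mult_left_mono)
    using key[OF fs] mult_left_mono[of _ 1 "ennreal c"] by auto
  also have "\<dots> = (\<integral>\<^sup>+h. ennreal c \<partial>measure_pmf B)"
    by (rule nn_integral_measure_pmf[symmetric])
  also have "\<dots> = ennreal c" by simp
  finally show ?thesis .
qed

lemma two_pow_le: "(2::real) ^ m * exp (- (real m + g)) \<le> exp (- g)"
proof -
  have "(2::real) ^ m \<le> exp 1 ^ m"
    using exp_ge_add_one_self[of 1] by (intro power_mono) auto
  also have "\<dots> = exp (real m)" by (simp add: exp_of_nat_mult[symmetric])
  finally have "(2::real) ^ m * exp (- (real m + g)) \<le> exp (real m) * exp (- (real m + g))"
    by (intro mult_right_mono) auto
  also have "\<dots> = exp (- g)" by (simp add: exp_add[symmetric])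
  finally show ?thesis .
qed

lemma main_bound:
  fixes PW :: "'w::countable pmf" and A :: "bool list list \<Rightarrow> 'h::countable pmf"
  assumes S_size: "\<forall>w\<in>set_pmf PW. set_pmf (S w) \<subseteq> datasets b n"
  shows "measure_pmf.prob (joint PW S A)
           {(w,h). pmf (joint PW Sstar A) (w,h) > 0 \<and> log_ratio (joint PW Sstar A) (w,h) \<ge> real (b*n) + g}
         \<le> exp (- g)"
proof -
  define J' where "J' = joint PW Sstar A"
  define PH where "PH = map_pmf snd J'"
  define r where "r = (\<lambda>w h. pmf J' (w,h) / (pmf PW w * pmf PH h))"
  define c where "c = exp (- (real (b*n) + g))"
  define F where "F = {(w,h). pmf J' (w,h) > 0 \<and> log_ratio J' (w,h) \<ge> real (b*n) + g}"
  define DS where "DS = datasets b n"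
  have c0: "0 \<le> c" by (simp add: c_def)
  have fs: "\<And>x. x \<in> set_pmf J' \<Longrightarrow> fst x \<in> set_pmf PW" unfolding J'_def by (rule set_joint)
  have fstJ: "map_pmf fst J' = PW" unfolding J'_def by (rule fst_joint)
  have ind: "indicator F (w,h) \<le> ennreal (c * r w h)" for w h
  proof (cases "(w,h) \<in> F")
    case True
    then have p: "pmf J' (w,h) > 0" and l: "log_ratio J' (w,h) \<ge> real (b*n) + g" by (auto simp: F_def)
    have s: "(w,h) \<in> set_pmf J'" using p by (simp add: set_pmf_iff)
    have pw: "pmf PW w > 0" using fs[OF s] by (simp add: pmf_positive)
    have "h \<in> set_pmf PH" unfolding PH_def using s by force
    then have ph: "pmf PH h > 0" by (simp add: pmf_positive)
    have rpos: "r w h > 0" unfolding r_def using p pw ph by simp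
    have "log_ratio J' (w,h) = ln (r w h)"
      unfolding log_ratio_def r_def PH_def fstJ by simp
    then have "exp (real (b*n) + g) \<le> r w h" using l rpos
      by (metis exp_le_cancel_iff exp_ln)
    then have "1 \<le> c * r w h" unfolding c_def
      by (metis exp_minus_inverse exp_gt_zero mult_left_mono less_imp_le mult.commute)
    then show ?thesis using True by simp
  qed (simp)
  have fin: "finite DS" and card: "card DS = 2 ^ (b*n)" using card_datasets unfolding DS_def by auto
  let ?g = "\<lambda>w t. \<integral>\<^sup>+h. ennreal (c * r w h) \<partial>measure_pmf (A t)"
  have "emeasure (measure_pmf (joint PW S A)) F = (\<integral>\<^sup>+x. indicator F x \<partial>measure_pmf (joint PW S A))"
    by simp
  also have "\<dots> \<le> (\<integral>\<^sup>+x. ennreal (c * r (fst x) (snd x)) \<partial>measure_pmf (joint PW S A))"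
    by (intro nn_integral_mono) (use ind in auto)
  also have "\<dots> = (\<integral>\<^sup>+w. \<integral>\<^sup>+t. ?g w t \<partial>measure_pmf (S w) \<partial>measure_pmf PW)"
    unfolding joint_def by simp
  also have "\<dots> \<le> (\<integral>\<^sup>+w. (\<Sum>t\<in>DS. ?g w t) \<partial>measure_pmf PW)"
  proof (intro nn_integral_mono_AE AE_pmfI)
    fix w assume w: "w \<in> set_pmf PW"
    have sub: "set_pmf (S w) \<subseteq> DS" using S_size w by (auto simp: DS_def)
    then have fs': "finite (set_pmf (S w))" using fin finite_subset by blast
    have "(\<integral>\<^sup>+t. ?g w t \<partial>measure_pmf (S w)) = (\<Sum>t\<in>set_pmf (S w). ennreal (pmf (S w) t) * ?g w t)"
      using nn_integral_measure_pmf_finite[OF fs', of "?g w"] by (simp add: mult.commute)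
    also have "\<dots> \<le> (\<Sum>t\<in>set_pmf (S w). ?g w t)"
    proof (intro sum_mono)
      fix t
      have "ennreal (pmf (S w) t) * ?g w t \<le> 1 * ?g w t"
        by (intro mult_right_mono) (auto simp: pmf_le_1)
      then show "ennreal (pmf (S w) t) * ?g w t \<le> ?g w t" by simp
    qed
    also have "\<dots> \<le> (\<Sum>t\<in>DS. ?g w t)"
      by (intro sum_mono2 fin sub) auto
    finally show "(\<integral>\<^sup>+t. ?g w t \<partial>measure_pmf (S w)) \<le> (\<Sum>t\<in>DS. ?g w t)" .
  qed
  also have "\<dots> = (\<Sum>t\<in>DS. \<integral>\<^sup>+w. ?g w t \<partial>measure_pmf PW)"
    by (rule nn_integral_sum) auto
  also have "\<dots> \<le> (\<Sum>t\<in>DS. ennreal c)"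
  proof (intro sum_mono)
    fix t
    show "(\<integral>\<^sup>+w. ?g w t \<partial>measure_pmf PW) \<le> ennreal c"
      unfolding r_def PH_def by (rule inner_bound[OF fs c0])
  qed
  also have "\<dots> = ennreal (2 ^ (b*n) * c)"
    using card c0 by (simp add: ennreal_mult' ennreal_of_nat_eq_real_of_nat)
  also have "\<dots> \<le> ennreal (exp (- g))"
    unfolding c_def using two_pow_le[of "b*n" g] by (intro ennreal_leI) simp
  finally have "ennreal (measure_pmf.prob (joint PW S A) F) \<le> ennreal (exp (- g))"
    by (simp add: measure_pmf.emeasure_eq_measure)
  then show ?thesis unfolding F_def J'_def by (simp add: ennreal_le_iff)
qed

theorem theorem1:
  fixes PW :: "'w::countable pmf"
    and A :: "bool list list \<Rightarrow> 'h::countable pmf"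
    and dst :: "'w \<Rightarrow> 'h \<Rightarrow> real"
    and b n :: nat
    and \<delta> \<epsilon> lam :: real
    and S Sstar :: "'w \<Rightarrow> bool list list pmf"
  assumes b_pos: "b > 0"
    and dist_nonneg: "\<forall>w h. 0 \<le> dst w h"
    and dist_bounded: "\<exists>B. \<forall>w h. dst w h \<le> B"
    and dmin_exists: "{x. RD b PW A dst x < \<infinity>} \<noteq> {}"
    and d_gt: "\<delta> > dmin b PW A dst"
    and Sstar_valid: "\<forall>w. set_pmf (Sstar w) \<subseteq> all_datasets b"
    and Sstar_dist: "avg_distortion PW Sstar A dst = \<delta>"
    and Sstar_opt: "mutual_info_pmf (joint PW Sstar A) = RD b PW A dst \<delta>"
    and lam_deriv: "((\<lambda>x. real_of_ereal (RD b PW A dst x)) has_real_derivative (- lam)) (at \<delta>)"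
    and lam_pos: "lam > 0"
    and n_pos: "n > 0"
    and eps: "0 \<le> \<epsilon>" "\<epsilon> \<le> 1"
    and S_size: "\<forall>w\<in>set_pmf PW. set_pmf (S w) \<subseteq> datasets b n"
    and S_err: "measure_pmf.prob (joint PW S A) {(w, h). dst w h > \<delta>} \<le> \<epsilon>"
  shows "(SUP \<gamma>\<in>{0..}. measure_pmf.prob (joint PW S A)
            {(w, h). tilted_info PW A dst Sstar lam \<delta> w h \<ge> ereal (real (b * n) + \<gamma>)}
          - exp (- \<gamma>)) \<le> \<epsilon>"
proof (rule cSUP_least)
  show "{0::real..} \<noteq> {}" by auto
next
  fix g :: real assume "g \<in> {0..}"
  define J where "J = joint PW S A"
  define J' where "J' = joint PW Sstar A"
  define E where "E = {(w, h). tilted_info PW A dst Sstar lam \<delta> w h \<ge> ereal (real (b * n) + g)}"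
  define D where "D = {(w, h). dst w h > \<delta>}"
  define F where "F = {(w,h). pmf J' (w,h) > 0 \<and> log_ratio J' (w,h) \<ge> real (b*n) + g}"
  have sub: "E \<subseteq> D \<union> F"
  proof
    fix x assume x: "x \<in> E"
    obtain w h where xw: "x = (w,h)" by force
    show "x \<in> D \<union> F"
    proof (cases "dst w h > \<delta>")
      case True then show ?thesis by (simp add: xw D_def)
    next
      case False
      have neg: "lam * (dst w h - \<delta>) \<le> 0"
        using False lam_pos by (intro mult_nonneg_nonpos) auto
      have t0: "tilted_info PW A dst Sstar lam \<delta> w h \<ge> ereal (real (b * n) + g)"
        using x unfolding xw E_def by simp
      have t: "info_density J' w h + ereal (lam * (dst w h - \<delta>)) \<ge> ereal (real (b * n) + g)"
        using t0 unfolding tilted_info_def J'_def .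
      have p: "pmf J' (w,h) \<noteq> 0"
      proof
        assume p0: "pmf J' (w,h) = 0"
        have "info_density J' w h = - \<infinity>" unfolding info_density_def using p0 by simp
        then show False using t by simp
      qed
      have "info_density J' w h = ereal (log_ratio J' (w,h))" unfolding info_density_def using p by simp
      then have "ereal (real (b * n) + g) \<le> ereal (log_ratio J' (w,h) + lam * (dst w h - \<delta>))"
        using t by simp
      then have "real (b * n) + g \<le> log_ratio J' (w,h) + lam * (dst w h - \<delta>)"
        by (simp only: ereal_less_eq)
      then have "log_ratio J' (w,h) \<ge> real (b * n) + g" using neg by linarith
      then show ?thesis using p by (simp add: xw F_def)
    qed
  qed
  have m1: "measure_pmf.prob J E \<le> measure_pmf.prob J (D \<union> F)"
    by (rule measure_pmf.finite_measure_mono[OF sub]) simp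
  have m2: "measure_pmf.prob J (D \<union> F) \<le> measure_pmf.prob J D + measure_pmf.prob J F"
    by (rule measure_Un_le) auto
  have m3: "measure_pmf.prob J D \<le> \<epsilon>" using S_err by (simp add: J_def D_def)
  have m4: "measure_pmf.prob J F \<le> exp (- g)"
    unfolding J_def F_def J'_def by (rule main_bound[OF S_size])
  have "measure_pmf.prob J E - exp (- g) \<le> \<epsilon>" using m1 m2 m3 m4 by linarith
  then show "measure_pmf.prob (joint PW S A) {(w, h). tilted_info PW A dst Sstar lam \<delta> w h \<ge> ereal (real (b * n) + g)} - exp (- g) \<le> \<epsilon>"
    unfolding J_def E_def .
qed

end
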